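(* Let $k$ be an infinite field of characteristic $0$. If $X_1,X_2,Y_1,Y_2$ are finite sets and the free representations $W(X_1,Y_1)$ and $W(X_2,Y_2)$ are isomorphic, then $|X_1|=|X_2|$ and $|Y_1|=|Y_2|$.
   Context: A representation $(L,V)$ is a Lie algebra $L$ over $k$ with an $L$-module $V$; an isomorphism is a pair $(\varphi,\psi)$ of a Lie algebra isomorphism $\varphi$ and a linear bijection $\psi$ with $\varphi(l)\circ\psi(v)=\psi(l\circ v)$. $W(X,Y)=(L(X),A(X)Y)$, where $L(X)$ is the free Lie algebra on $X$, $A(X)$ the free associative algebra with unit on $X$, and $A(X)Y=\bigoplus_{y\in Y}A(X)y$ the free $A(X)$-module with basis $Y$. *)

theory Defs
  imports Main
begin

text \<open>Concrete model of the free associative algebra A(X) with unit on a set X: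
  finitely supported functions from words (lists over X) to k, with the
  concatenation (convolution) product.\<close>

definition falg :: "'a set \<Rightarrow> ('a list \<Rightarrow> 'k::comm_ring_1) set" where
  "falg X = {p. finite {w. p w \<noteq> 0} \<and> (\<forall>w. p w \<noteq> 0 \<longrightarrow> set w \<subseteq> X)}"

definition amul :: "('a list \<Rightarrow> 'k::comm_ring_1) \<Rightarrow> ('a list \<Rightarrow> 'k) \<Rightarrow> 'a list \<Rightarrow> 'k" where
  "amul p q w = (\<Sum>i\<le>length w. p (take i w) * q (drop i w))"

definition bracket :: "('a list \<Rightarrow> 'k::comm_ring_1) \<Rightarrow> ('a list \<Rightarrow> 'k) \<Rightarrow> 'a list \<Rightarrow> 'k" where
  "bracket p q = (\<lambda>w. amul p q w - amul q p w)"

definition gen :: "'a \<Rightarrow> 'a list \<Rightarrow> 'k::comm_ring_1" where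
  "gen x = (\<lambda>w. if w = [x] then 1 else 0)"

text \<open>The free Lie algebra L(X), realised (as usual) as the Lie subalgebra of
  A(X) (with the commutator bracket) generated by X.\<close>
inductive_set flie :: "'a set \<Rightarrow> ('a list \<Rightarrow> 'k::comm_ring_1) set" for X :: "'a set" where
  gen: "x \<in> X \<Longrightarrow> gen x \<in> flie X"
| zero: "(\<lambda>_. 0) \<in> flie X"
| add: "p \<in> flie X \<Longrightarrow> q \<in> flie X \<Longrightarrow> (\<lambda>w. p w + q w) \<in> flie X"
| smult: "p \<in> flie X \<Longrightarrow> (\<lambda>w. c * p w) \<in> flie X"
| br: "p \<in> flie X \<Longrightarrow> q \<in> flie X \<Longrightarrow> bracket p q \<in> flie X"

text \<open>The free A(X)-module A(X)Y with basis Y: finitely supported functions on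
  (word, basis element) pairs.\<close>
definition fmod :: "'a set \<Rightarrow> 'b set \<Rightarrow> ('a list \<times> 'b \<Rightarrow> 'k::comm_ring_1) set" where
  "fmod X Y = {v. finite {z. v z \<noteq> 0} \<and> (\<forall>w y. v (w, y) \<noteq> 0 \<longrightarrow> set w \<subseteq> X \<and> y \<in> Y)}"

definition act :: "('a list \<Rightarrow> 'k::comm_ring_1) \<Rightarrow> ('a list \<times> 'b \<Rightarrow> 'k) \<Rightarrow> 'a list \<times> 'b \<Rightarrow> 'k" where
  "act p v = (\<lambda>(w, y). \<Sum>i\<le>length w. p (take i w) * v (drop i w, y))"

definition linear_on :: "('x \<Rightarrow> 'k::comm_ring_1) set \<Rightarrow> (('x \<Rightarrow> 'k) \<Rightarrow> ('z \<Rightarrow> 'k)) \<Rightarrow> bool" where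
  "linear_on A f \<longleftrightarrow> (\<forall>p\<in>A. \<forall>q\<in>A. \<forall>a b.
      f (\<lambda>u. a * p u + b * q u) = (\<lambda>u. a * f p u + b * f q u))"

text \<open>An isomorphism (phi, psi) of representations W(X1,Y1) \<rightarrow> W(X2,Y2).\<close>
definition rep_iso ::
  "(('a list \<Rightarrow> 'k::comm_ring_1) \<Rightarrow> ('c list \<Rightarrow> 'k)) \<Rightarrow>
   (('a list \<times> 'b \<Rightarrow> 'k) \<Rightarrow> ('c list \<times> 'd \<Rightarrow> 'k)) \<Rightarrow>
   'a set \<Rightarrow> 'b set \<Rightarrow> 'c set \<Rightarrow> 'd set \<Rightarrow> bool" where
  "rep_iso \<phi> \<psi> X1 Y1 X2 Y2 \<longleftrightarrow>
     bij_betw \<phi> (flie X1) (flie X2) \<and> linear_on (flie X1) \<phi> \<and>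
     (\<forall>p\<in>flie X1. \<forall>q\<in>flie X1. \<phi> (bracket p q) = bracket (\<phi> p) (\<phi> q)) \<and>
     bij_betw \<psi> (fmod X1 Y1) (fmod X2 Y2) \<and> linear_on (fmod X1 Y1) \<psi> \<and>
     (\<forall>l\<in>flie X1. \<forall>v\<in>fmod X1 Y1. act (\<phi> l) (\<psi> v) = \<psi> (act l v))"

end

theory Submission
  imports Defs Complex_Main "HOL-Library.Function_Algebras"
begin

lemma sum_fun_apply: "(\<Sum>i\<in>F. g i) x = (\<Sum>i\<in>F. g i x)"
  by (induction F rule: infinite_finite_induct) auto

definition suppin :: "'i set \<Rightarrow> ('i \<Rightarrow> 'k::zero) set" where
  "suppin I = {c. \<forall>i. i \<notin> I \<longrightarrow> c i = 0}"

definition dlt :: "'i \<Rightarrow> 'i \<Rightarrow> 'k::{zero,one}" where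
  "dlt i = (\<lambda>x. if x = i then 1 else 0)"

lemma dlt_inj: "inj (dlt :: 'i \<Rightarrow> 'i \<Rightarrow> 'k::zero_neq_one)"
  unfolding inj_def dlt_def by (metis zero_neq_one)

lemma dlt_in: "i \<in> I \<Longrightarrow> dlt i \<in> suppin I"
  by (auto simp: dlt_def suppin_def)

lemma decomp:
  fixes c :: "'i \<Rightarrow> 'k::comm_ring_1"
  assumes "finite I" "c \<in> suppin I"
  shows "c = (\<Sum>i\<in>I. (\<lambda>x. c i * dlt i x))"
proof
  fix x
  have "(\<Sum>i\<in>I. (\<lambda>x. c i * dlt i x)) x = (\<Sum>i\<in>I. c i * dlt i x)" by (simp add: sum_fun_apply)
  also have "\<dots> = (\<Sum>i\<in>I. if x = i then c i else 0)" by (rule sum.cong) (auto simp: dlt_def)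
  also have "\<dots> = c x" using assms by (auto simp: suppin_def)
  finally show "c x = (\<Sum>i\<in>I. (\<lambda>x. c i * dlt i x)) x" by simp
qed

lemma lin_bij_card:
  fixes T :: "('i \<Rightarrow> 'k::field) \<Rightarrow> ('j \<Rightarrow> 'k)"
  assumes fI: "finite I" and fJ: "finite J"
    and lin: "\<And>c c' a b. c \<in> suppin I \<Longrightarrow> c' \<in> suppin I \<Longrightarrow>
          T (\<lambda>i. a * c i + b * c' i) = (\<lambda>j. a * T c j + b * T c' j)"
    and inj: "inj_on T (suppin I)" and img: "T ` suppin I = suppin J"
  shows "card I = card J"
proof -
  interpret vs: Vector_Spaces.vector_space "\<lambda>(a::'k) (f::'j\<Rightarrow>'k) x. a * f x"
    by unfold_locales (auto simp: fun_eq_iff algebra_simps)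
  have cl: "(\<Sum>i\<in>F. (\<lambda>x. u i * c i x)) \<in> suppin I" if "\<forall>i\<in>F. c i \<in> suppin I" for F and u :: "'i \<Rightarrow> 'k" and c :: "'i \<Rightarrow> 'i \<Rightarrow> 'k"
    using that by (auto simp: suppin_def sum_fun_apply intro!: sum.neutral)
  have T0: "T 0 = 0"
  proof -
    have "T (\<lambda>i. 0 * (0::'i\<Rightarrow>'k) i + 0 * (0::'i\<Rightarrow>'k) i) = (\<lambda>j. 0 * T 0 j + 0 * T 0 j)"
      by (rule lin) (auto simp: suppin_def)
    then show ?thesis by (simp add: zero_fun_def)
  qed
  have Tsum: "T (\<Sum>i\<in>F. (\<lambda>x. u i * c i x)) = (\<Sum>i\<in>F. (\<lambda>x. u i * T (c i) x))"
    if "finite F" "\<forall>i\<in>F. c i \<in> suppin I" for F and u :: "'i \<Rightarrow> 'k" and c :: "'i \<Rightarrow> 'i \<Rightarrow> 'k"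
    using that
  proof (induction F rule: finite_induct)
    case empty then show ?case using T0 by (simp add: zero_fun_def)
  next
    case (insert i F)
    have "T (\<Sum>i\<in>insert i F. (\<lambda>x. u i * c i x)) = T (\<lambda>x. 1 * (\<Sum>i\<in>F. (\<lambda>x. u i * c i x)) x + u i * c i x)"
      using insert by (simp add: plus_fun_def add.commute)
    also have "\<dots> = (\<lambda>x. 1 * T (\<Sum>i\<in>F. (\<lambda>x. u i * c i x)) x + u i * T (c i) x)"
      by (rule lin) (use insert cl in auto)
    also have "\<dots> = (\<Sum>i\<in>insert i F. (\<lambda>x. u i * T (c i) x))"
      using insert by (simp add: plus_fun_def add.commute)
    finally show ?case .
  qed
  have dI: "\<forall>i\<in>I. (dlt i :: 'i \<Rightarrow> 'k) \<in> suppin I" by (simp add: dlt_in)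
  define DJ where "DJ = (dlt ` J :: ('j \<Rightarrow> 'k) set)"
  define E where "E = (\<lambda>i. T (dlt i)) ` I"
  have cardDJ: "card DJ = card J" unfolding DJ_def
    by (rule card_image) (meson dlt_inj inj_on_subset subset_UNIV)
  have injE: "inj_on (\<lambda>i. T (dlt i)) I"
  proof (rule inj_onI)
    fix x y assume "x\<in>I" "y\<in>I" "T (dlt x) = T (dlt y)"
    then have "dlt x = (dlt y :: 'i \<Rightarrow> 'k)" using inj dlt_in by (metis inj_onD)
    then show "x = y" using dlt_inj by (metis injD)
  qed
  have cardE: "card E = card I" unfolding E_def using injE by (rule card_image)
  have fE: "finite E" "finite DJ" using fI fJ by (auto simp: E_def DJ_def)
  have spanJ: "c \<in> vs.span DJ" if "c \<in> suppin J" for c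
  proof -
    have "c = (\<Sum>j\<in>J. (\<lambda>x. c j * dlt j x))" using decomp fJ that by blast
    also have "\<dots> \<in> vs.span DJ"
      proof (rule vs.span_sum)
      fix j assume "j \<in> J"
      then have "dlt j \<in> vs.span DJ" by (auto intro: vs.span_base simp: DJ_def)
      then show "(\<lambda>x. c j * dlt j x) \<in> vs.span DJ" by (rule vs.span_scale)
    qed
    finally show ?thesis .
  qed
  have indDJ: "vs.independent DJ"
  proof -
    { fix u assume "(\<Sum>v\<in>DJ. (\<lambda>x. u v * v x)) = 0"
      then have SJ: "(\<Sum>j\<in>J. (\<lambda>x. u (dlt j) * dlt j x)) = 0"
        unfolding DJ_def by (subst (asm) sum.reindex) (auto intro: inj_on_subset[OF dlt_inj])
      have Z: "(\<Sum>j'\<in>J. u (dlt j') * dlt j' j) = 0" for j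
        using fun_cong[OF SJ, of j] by (simp add: sum_fun_apply)
      have "u (dlt j) = 0" if "j \<in> J" for j
      proof -
        have "(\<Sum>j'\<in>J. u (dlt j') * dlt j' j) = (\<Sum>j'\<in>J. if j = j' then u (dlt j') else 0)"
          by (rule sum.cong) (auto simp: dlt_def)
        also have "\<dots> = u (dlt j)" using that fJ by simp
        finally show ?thesis using Z[of j] by simp
      qed
      then have "\<forall>v\<in>DJ. u v = 0" by (auto simp: DJ_def) }
    then show ?thesis using vs.dependent_finite[OF fE(2)] by blast
  qed
  have indE: "vs.independent E"
  proof -
    { fix u assume A: "(\<Sum>v\<in>E. (\<lambda>x. u v * v x)) = 0"
      have "(\<Sum>i\<in>I. (\<lambda>x. u (T (dlt i)) * T (dlt i) x)) = 0"
        using A unfolding E_def by (subst (asm) sum.reindex[OF injE]) simp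
      then have "T (\<Sum>i\<in>I. (\<lambda>x. u (T (dlt i)) * dlt i x)) = T 0"
        using Tsum[OF fI, of dlt "\<lambda>i. u (T (dlt i))"] T0 dI by auto
      then have S0: "(\<Sum>i\<in>I. (\<lambda>x. u (T (dlt i)) * dlt i x)) = 0"
      proof -
        have "(\<Sum>i\<in>I. (\<lambda>x. u (T (dlt i)) * dlt i x)) \<in> suppin I" using cl[of I dlt] dI by auto
        moreover have "(0::'i\<Rightarrow>'k) \<in> suppin I" by (simp add: suppin_def)
        ultimately show ?thesis using inj_onD[OF inj] \<open>T _ = T 0\<close> by blast
      qed
      have "u (T (dlt i)) = 0" if "i \<in> I" for i
      proof -
        have "(\<Sum>i'\<in>I. (\<lambda>x. u (T (dlt i')) * dlt i' x)) i = (\<Sum>i'\<in>I. u (T (dlt i')) * dlt i' i)"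
          by (simp add: sum_fun_apply)
        also have "\<dots> = (\<Sum>i'\<in>I. if i = i' then u (T (dlt i')) else 0)"
          by (rule sum.cong) (auto simp: dlt_def)
        also have "\<dots> = u (T (dlt i))" using that fI by simp
        finally show ?thesis using S0 by simp
      qed
      then have "\<forall>v\<in>E. u v = 0" by (auto simp: E_def) }
    then show ?thesis using vs.dependent_finite[OF fE(1)] by blast
  qed
  have EJ: "E \<subseteq> vs.span DJ"
    using img dI spanJ by (auto simp: E_def)
  have DJE: "DJ \<subseteq> vs.span E"
  proof
    fix d assume "d \<in> DJ"
    then obtain j where j: "j \<in> J" "d = dlt j" by (auto simp: DJ_def)
    then have "d \<in> T ` suppin I" using img dlt_in by auto
    then obtain g where g: "g \<in> suppin I" "d = T g" by auto
    have "d = T (\<Sum>i\<in>I. (\<lambda>x. g i * dlt i x))" using decomp[OF fI g(1)] g by simp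
    also have "\<dots> = (\<Sum>i\<in>I. (\<lambda>x. g i * T (dlt i) x))" using Tsum[OF fI, of dlt g] dI by auto
    also have "\<dots> \<in> vs.span E"
      proof (rule vs.span_sum)
      fix i assume "i \<in> I"
      then have "T (dlt i) \<in> vs.span E" by (auto intro: vs.span_base simp: E_def)
      then show "(\<lambda>x. g i * T (dlt i) x) \<in> vs.span E" by (rule vs.span_scale)
    qed
    finally show "d \<in> vs.span E" .
  qed
  show ?thesis
    using vs.independent_span_bound[OF fE(2) indE EJ] vs.independent_span_bound[OF fE(1) indDJ DJE]
      cardE cardDJ by simp
qed

lemma sum_nz: "(\<Sum>i\<in>F. g i) \<noteq> (0::'k::comm_monoid_add) \<Longrightarrow> \<exists>i\<in>F. g i \<noteq> 0"
  by (meson sum.neutral)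

lemma amul_supp: "{w. amul p q w \<noteq> 0} \<subseteq> (\<lambda>(a,b). a@b) ` ({w. p w \<noteq> 0} \<times> {w. q w \<noteq> 0})"
proof
  fix w assume "w \<in> {w. amul p q w \<noteq> 0}"
  then obtain i where "p (take i w) * q (drop i w) \<noteq> 0" unfolding amul_def using sum_nz by force
  then have "p (take i w) \<noteq> 0" "q (drop i w) \<noteq> 0" by auto
  then show "w \<in> (\<lambda>(a,b). a@b) ` ({w. p w \<noteq> 0} \<times> {w. q w \<noteq> 0})"
    by (auto intro!: image_eqI[where x="(take i w, drop i w)"])
qed

lemma amul_nz: "amul p q w \<noteq> 0 \<Longrightarrow> \<exists>a b. w = a @ b \<and> p a \<noteq> 0 \<and> q b \<noteq> 0"
proof -
  assume "amul p q w \<noteq> 0"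
  then obtain i where "p (take i w) * q (drop i w) \<noteq> 0" unfolding amul_def using sum_nz by force
  then show ?thesis by (intro exI[of _ "take i w"] exI[of _ "drop i w"]) auto
qed

lemma act_nz: "act p v (w, y) \<noteq> 0 \<Longrightarrow> \<exists>a b. w = a @ b \<and> p a \<noteq> 0 \<and> v (b, y) \<noteq> 0"
proof -
  assume "act p v (w, y) \<noteq> 0"
  then obtain i where "p (take i w) * v (drop i w, y) \<noteq> 0" unfolding act_def using sum_nz by force
  then show ?thesis by (intro exI[of _ "take i w"] exI[of _ "drop i w"]) auto
qed

lemma act_supp: "{z. act p v z \<noteq> 0} \<subseteq> (\<lambda>(a,(b,y)). (a@b,y)) ` ({w. p w \<noteq> 0} \<times> {z. v z \<noteq> 0})"
proof
  fix z assume "z \<in> {z. act p v z \<noteq> 0}"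
  then obtain w y where z: "z = (w,y)" "act p v (w,y) \<noteq> 0" by (cases z) auto
  then obtain a b where "w = a @ b" "p a \<noteq> 0" "v (b, y) \<noteq> 0" using act_nz[OF z(2)] by blast
  then show "z \<in> (\<lambda>(a,(b,y)). (a@b,y)) ` ({w. p w \<noteq> 0} \<times> {z. v z \<noteq> 0})"
    using z by (auto intro!: image_eqI[where x="(a, (b, y))"])
qed

lemma amul_falg: "p \<in> falg X \<Longrightarrow> q \<in> falg X \<Longrightarrow> amul p q \<in> falg X"
  unfolding falg_def
  apply (auto dest!: amul_nz)
  apply (rule finite_subset[OF amul_supp], auto)
  done

lemma falg_diff: "p \<in> falg X \<Longrightarrow> q \<in> falg X \<Longrightarrow> (\<lambda>w. p w - q w) \<in> falg X"
  unfolding falg_def by (auto intro: finite_subset[of _ "{w. p w \<noteq> 0} \<union> {w. q w \<noteq> 0}"]) (metis subset_iff)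

lemma bracket_falg: "p \<in> falg X \<Longrightarrow> q \<in> falg X \<Longrightarrow> bracket p q \<in> falg X"
  unfolding bracket_def by (intro falg_diff amul_falg)

lemma flie_falg: "p \<in> flie X \<Longrightarrow> p \<in> falg X"
proof (induction rule: flie.induct)
  case (gen x) then show ?case unfolding falg_def gen_def by auto
next
  case zero then show ?case unfolding falg_def by auto
next
  case (add p q) then show ?case unfolding falg_def
    by (auto intro: finite_subset[of _ "{w. p w \<noteq> 0} \<union> {w. q w \<noteq> 0}"]) (metis add.right_neutral add_0 subset_iff)
next
  case (smult p c) then show ?case unfolding falg_def
    by (auto intro: finite_subset[of _ "{w. p w \<noteq> 0}"]) (metis mult_zero_right subset_iff)
next
  case (br p q) show ?case by (rule bracket_falg[OF br.IH])
qed

lemma amul_nil: "amul p q [] = p [] * q []"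
  by (simp add: amul_def)

lemma amul_single: "amul p q [x] = p [] * q [x] + p [x] * q []"
  by (simp add: amul_def atMost_Suc)

lemma bracket_nil: "bracket p q [] = 0"
  by (simp add: bracket_def amul_nil mult.commute)

lemma bracket_single: "bracket p q [x] = 0"
  by (simp add: bracket_def amul_single mult.commute)

lemma flie_nil: "p \<in> flie X \<Longrightarrow> p [] = 0"
  by (induction rule: flie.induct) (auto simp: gen_def bracket_nil)

lemma flie_single: "p \<in> flie X \<Longrightarrow> x \<notin> X \<Longrightarrow> p [x] = 0"
  by (induction rule: flie.induct) (auto simp: gen_def bracket_single)

lemma act_fmod: "l \<in> flie X \<Longrightarrow> v \<in> fmod X Y \<Longrightarrow> act l v \<in> fmod X Y"
proof -
  assume l: "l \<in> flie X" and v: "v \<in> fmod X Y"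
  have lf: "l \<in> falg X" using flie_falg[OF l] .
  show ?thesis unfolding fmod_def
  proof (rule CollectI, rule conjI)
    show "finite {z. act l v z \<noteq> 0}"
      by (rule finite_subset[OF act_supp]) (use lf v in \<open>auto simp: falg_def fmod_def\<close>)
  next
    show "\<forall>w y. act l v (w, y) \<noteq> 0 \<longrightarrow> set w \<subseteq> X \<and> y \<in> Y"
    proof (intro allI impI)
      fix w y assume A: "act l v (w, y) \<noteq> 0"
      obtain a b where "w = a @ b" "l a \<noteq> 0" "v (b, y) \<noteq> 0" using act_nz[OF A] by blast
      then show "set w \<subseteq> X \<and> y \<in> Y" using lf v by (auto simp: falg_def fmod_def)
    qed
  qed
qed

lemma act_gen: "act (gen x) u (w, y) = (case w of [] \<Rightarrow> 0 | x' # w' \<Rightarrow> if x' = x then u (w', y) else 0)"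
proof (cases w)
  case Nil then show ?thesis by (simp add: act_def gen_def)
next
  case (Cons x' w')
  have "act (gen x) u (w, y) = (\<Sum>i\<le>Suc (length w'). gen x (take i (x' # w')) * u (drop i (x' # w'), y))"
    by (simp add: act_def Cons)
  also have "\<dots> = gen x [] * u (x' # w', y) + (\<Sum>j\<le>length w'. gen x (x' # take j w') * u (drop j w', y))"
    by (subst sum.atMost_Suc_shift) simp
  also have "\<dots> = (\<Sum>j\<le>length w'. if j = 0 then (if x' = x then u (w', y) else 0) else 0)"
  proof -
    have A: "gen x (x' # take j w') * u (drop j w', y) = (if j = 0 then (if x' = x then u (w', y) else 0) else 0)"
      if "j \<in> {..length w'}" for j
    proof (cases j)
      case 0 then show ?thesis by (simp add: gen_def)
    next
      case (Suc k)
      then have "take j w' \<noteq> []" using that by (auto simp: take_eq_Nil)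
      then show ?thesis using Suc by (simp add: gen_def)
    qed
    have G0: "gen x [] * u (x' # w', y) = 0" by (simp add: gen_def)
    have GS: "(\<Sum>j\<le>length w'. gen x (x' # take j w') * u (drop j w', y)) = (\<Sum>j\<le>length w'. if j = 0 then (if x' = x then u (w', y) else 0) else 0)"
      by (rule sum.cong[OF refl A])
    show ?thesis unfolding G0 GS by (rule add_0)
  qed
  also have "\<dots> = (if x' = x then u (w', y) else 0)" by (subst sum.delta) auto
  also have "\<dots> = (case w of [] \<Rightarrow> 0 | x' # w' \<Rightarrow> if x' = x then u (w', y) else 0)"
    unfolding Cons list.case ..
  finally show ?thesis .
qed

lemma abstract_card:
  fixes f :: "('p \<Rightarrow> 'k::field) \<Rightarrow> ('q \<Rightarrow> 'k)" and ptA :: "'i \<Rightarrow> 'p" and ptB :: "'j \<Rightarrow> 'q"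
    and eA :: "('i \<Rightarrow> 'k) \<Rightarrow> ('p \<Rightarrow> 'k)" and eB :: "('j \<Rightarrow> 'k) \<Rightarrow> ('q \<Rightarrow> 'k)"
  assumes fI: "finite I" and fJ: "finite J"
    and CAA: "CA \<subseteq> A"
    and lin: "linear_on A f" and bij: "bij_betw f A B"
    and fC1: "f ` CA \<subseteq> CB" and fC2: "CB \<subseteq> f ` CA"
    and eA_in: "\<And>c. c \<in> suppin I \<Longrightarrow> eA c \<in> A"
    and eA_lin: "\<And>c c' a b. eA (\<lambda>i. a * c i + b * c' i) = (\<lambda>u. a * eA c u + b * eA c' u)"
    and eA_d: "\<And>c. c \<in> suppin I \<Longrightarrow> (\<lambda>i. eA c (ptA i)) = c"
    and dA_W: "\<And>a i. a \<in> A \<Longrightarrow> i \<notin> I \<Longrightarrow> a (ptA i) = 0"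
    and decA: "\<And>a. a \<in> A \<Longrightarrow> (\<lambda>u. a u - eA (\<lambda>i. a (ptA i)) u) \<in> CA"
    and dCA: "\<And>a i. a \<in> CA \<Longrightarrow> a (ptA i) = 0"
    and eB_in: "\<And>c. c \<in> suppin J \<Longrightarrow> eB c \<in> B"
    and eB_lin: "\<And>c c' a b. eB (\<lambda>i. a * c i + b * c' i) = (\<lambda>u. a * eB c u + b * eB c' u)"
    and eB_d: "\<And>c. c \<in> suppin J \<Longrightarrow> (\<lambda>i. eB c (ptB i)) = c"
    and dB_W: "\<And>a i. a \<in> B \<Longrightarrow> i \<notin> J \<Longrightarrow> a (ptB i) = 0"
    and decB: "\<And>a. a \<in> B \<Longrightarrow> (\<lambda>u. a u - eB (\<lambda>i. a (ptB i)) u) \<in> CB"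
    and dCB: "\<And>a i. a \<in> CB \<Longrightarrow> a (ptB i) = 0"
  shows "card I = card J"
proof -
  define T where "T c = (\<lambda>j. f (eA c) (ptB j))" for c
  have flin: "f (\<lambda>u. a * p u + b * q u) = (\<lambda>u. a * f p u + b * f q u)" if "p \<in> A" "q \<in> A" for p q and a b :: 'k
    using lin that unfolding linear_on_def by blast
  have fAB: "a \<in> A \<Longrightarrow> f a \<in> B" for a using bij by (auto simp: bij_betw_def)
  have injf: "inj_on f A" using bij by (auto simp: bij_betw_def)
  have eB0: "eB (\<lambda>_. 0) = (\<lambda>_. 0)" using eB_lin[of 0 "\<lambda>_. 0" 0 "\<lambda>_. 0"] by simp
  have eA0: "eA (\<lambda>_. 0) = (\<lambda>_. 0)" using eA_lin[of 0 "\<lambda>_. 0" 0 "\<lambda>_. 0"] by simp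
  have suppI_lin: "(\<lambda>i. a * c i + b * c' i) \<in> suppin I" if "c \<in> suppin I" "c' \<in> suppin I" for c c' :: "'i \<Rightarrow> 'k" and a b :: 'k
    using that by (auto simp: suppin_def)
  have Tlin: "T (\<lambda>i. a * c i + b * c' i) = (\<lambda>j. a * T c j + b * T c' j)"
    if "c \<in> suppin I" "c' \<in> suppin I" for c c' :: "'i \<Rightarrow> 'k" and a b :: 'k
    unfolding T_def eA_lin using flin[OF eA_in[OF that(1)] eA_in[OF that(2)]] by simp
  have Tin: "T c \<in> suppin J" if "c \<in> suppin I" for c
    unfolding T_def suppin_def using dB_W fAB eA_in that by auto
  have Tinj: "inj_on T (suppin I)"
  proof (rule inj_onI)
    fix c1 c2 assume c: "c1 \<in> suppin I" "c2 \<in> suppin I" "T c1 = T c2"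
    define a where "a = eA (\<lambda>i. 1 * c1 i + (-1) * c2 i)"
    have aA: "a \<in> A" unfolding a_def by (rule eA_in, rule suppI_lin) (use c in auto)
    have fa: "f a = (\<lambda>u. 1 * f (eA c1) u + (-1) * f (eA c2) u)"
      unfolding a_def eA_lin by (rule flin) (use c eA_in in auto)
    have "(\<lambda>j. f a (ptB j)) = (\<lambda>_. 0)" using c(3) unfolding fa T_def by (auto simp: fun_eq_iff dest: fun_cong)
    then have "(\<lambda>u. f a u - eB (\<lambda>i. f a (ptB i)) u) = f a" using eB0 by simp
    then have "f a \<in> CB" using decB[OF fAB[OF aA]] by simp
    then obtain a' where a': "a' \<in> CA" "f a' = f a" using fC2 by auto
    then have "a' = a" using injf CAA aA by (auto dest: inj_onD)
    then have "a \<in> CA" using a' by simp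
    then have "a (ptA i) = 0" for i using dCA by blast
    moreover have "(\<lambda>i. a (ptA i)) = (\<lambda>i. 1 * c1 i + (-1) * c2 i)"
      unfolding a_def by (rule eA_d, rule suppI_lin) (use c in auto)
    ultimately show "c1 = c2" by (auto simp: fun_eq_iff dest: fun_cong)
  qed
  have Timg: "T ` suppin I = suppin J"
  proof
    show "T ` suppin I \<subseteq> suppin J" using Tin by auto
  next
    show "suppin J \<subseteq> T ` suppin I"
    proof
      fix c' :: "'j \<Rightarrow> 'k" assume c': "c' \<in> suppin J"
      have "eB c' \<in> f ` A" using eB_in[OF c'] bij by (auto simp: bij_betw_def)
      then obtain a where a: "a \<in> A" "eB c' = f a" by auto
      define d where "d = (\<lambda>i. a (ptA i))"
      have dI: "d \<in> suppin I" using dA_W a by (auto simp: d_def suppin_def)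
      define m where "m = (\<lambda>u. a u - eA d u)"
      have mC: "m \<in> CA" unfolding m_def d_def using decA[OF a(1)] .
      have "a = (\<lambda>u. 1 * eA d u + 1 * m u)" by (simp add: m_def)
      then have "f a = (\<lambda>u. 1 * f (eA d) u + 1 * f m u)"
        using flin[OF eA_in[OF dI], of m 1 1] mC CAA by auto
      moreover have "f m (ptB j) = 0" for j using dCB fC1 mC by blast
      ultimately have "(\<lambda>j. f a (ptB j)) = T d" by (simp add: T_def)
      moreover have "(\<lambda>j. f a (ptB j)) = c'" using eB_d[OF c'] a by simp
      ultimately show "c' \<in> T ` suppin I" using dI by auto
    qed
  qed
  show ?thesis by (rule lin_bij_card[OF fI fJ Tlin Tinj Timg])
qed

lemma lin_zero: "linear_on A f \<Longrightarrow> (\<lambda>_. 0) \<in> A \<Longrightarrow> f (\<lambda>_. 0) = (\<lambda>_. 0)"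
  unfolding linear_on_def by (drule bspec, assumption, drule bspec, assumption) (drule spec[of _ 0], drule spec[of _ 0], simp)

lemma lin_add: "linear_on A f \<Longrightarrow> p \<in> A \<Longrightarrow> q \<in> A \<Longrightarrow> f (\<lambda>u. p u + q u) = (\<lambda>u. f p u + f q u)"
  unfolding linear_on_def by (drule bspec[of _ _ p], assumption, drule bspec[of _ _ q], assumption)
    (drule spec[of _ 1], drule spec[of _ 1], simp)

lemma lin_smult: "linear_on A f \<Longrightarrow> p \<in> A \<Longrightarrow> f (\<lambda>u. c * p u) = (\<lambda>u. c * f p u)"
  unfolding linear_on_def by (drule bspec[of _ _ p], assumption, drule bspec[of _ _ p], assumption)
    (drule spec[of _ c], drule spec[of _ 0], simp)

inductive_set comm :: "'a set \<Rightarrow> ('a list \<Rightarrow> 'k::comm_ring_1) set" for X where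
  cbr: "p \<in> flie X \<Longrightarrow> q \<in> flie X \<Longrightarrow> bracket p q \<in> comm X"
| czero: "(\<lambda>_. 0) \<in> comm X"
| cadd: "p \<in> comm X \<Longrightarrow> q \<in> comm X \<Longrightarrow> (\<lambda>w. p w + q w) \<in> comm X"
| csmult: "p \<in> comm X \<Longrightarrow> (\<lambda>w. c * p w) \<in> comm X"

lemma comm_flie: "p \<in> comm X \<Longrightarrow> p \<in> flie X"
  by (induction rule: comm.induct) (auto intro: flie.intros)

lemma comm_single: "p \<in> comm X \<Longrightarrow> p [x] = 0"
  by (induction rule: comm.induct) (auto simp: bracket_single)

definition eX :: "'a set \<Rightarrow> ('a \<Rightarrow> 'k::comm_ring_1) \<Rightarrow> 'a list \<Rightarrow> 'k" where
  "eX X c = (\<lambda>w. \<Sum>x\<in>X. c x * gen x w)"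

lemma flie_sum: "finite F \<Longrightarrow> F \<subseteq> X \<Longrightarrow> (\<lambda>w. \<Sum>x\<in>F. c x * gen x w) \<in> flie X"
proof (induction F rule: finite_induct)
  case empty then show ?case using flie.zero by simp
next
  case (insert x F)
  have "(\<lambda>w. c x * gen x w + (\<Sum>x\<in>F. c x * gen x w)) \<in> flie X"
    using insert by (intro flie.add flie.smult flie.gen) auto
  then show ?case using insert by simp
qed

lemma eX_in: "finite X \<Longrightarrow> eX X c \<in> flie X"
  unfolding eX_def by (rule flie_sum) auto

lemma eX_lin: "eX X (\<lambda>i. a * c i + b * c' i) = (\<lambda>u. a * eX X c u + b * eX X c' u)"
  by (simp add: eX_def fun_eq_iff sum.distrib sum_distrib_left algebra_simps)

lemma eX_single: "finite X \<Longrightarrow> eX X c [i] = (if i \<in> X then c i else 0)"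
proof -
  assume fX: "finite X"
  have "eX X c [i] = (\<Sum>x\<in>X. if i = x then c x else 0)"
    unfolding eX_def by (rule sum.cong) (auto simp: gen_def)
  then show ?thesis using fX by simp
qed

lemma eX_d: "finite X \<Longrightarrow> c \<in> suppin X \<Longrightarrow> (\<lambda>i. eX X c [i]) = c"
  by (auto simp: eX_single suppin_def fun_eq_iff)

lemma eX_gen: "finite X \<Longrightarrow> x \<in> X \<Longrightarrow> eX X (\<lambda>i. gen x [i]) = gen x"
proof
  fix u assume fX: "finite X" and x: "x \<in> X"
  have "eX X (\<lambda>i. gen x [i]) u = (\<Sum>y\<in>X. if x = y then gen x u else 0)"
    unfolding eX_def by (rule sum.cong) (auto simp: gen_def)
  then show "eX X (\<lambda>i. gen x [i]) u = gen x u" using fX x by simp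
qed

lemma eX_zero: "eX X (\<lambda>_. 0) = (\<lambda>_. 0)"
  by (simp add: eX_def)

lemma mem_eq: "x \<in> S \<Longrightarrow> y = x \<Longrightarrow> y \<in> S" by simp

lemma decX:
  assumes fX: "finite X" and p: "p \<in> flie X"
  shows "(\<lambda>u. p u - eX X (\<lambda>i. p [i]) u) \<in> comm X"
  using p
proof (induction rule: flie.induct)
  case (gen x) then show ?case by (intro mem_eq[OF comm.czero]) (simp add: eX_gen fX)
next
  case zero then show ?case by (intro mem_eq[OF comm.czero]) (simp add: eX_zero)
next
  case (add p q)
  have e: "eX X (\<lambda>i. p [i] + q [i]) = (\<lambda>u. eX X (\<lambda>i. p [i]) u + eX X (\<lambda>i. q [i]) u)"
    using eX_lin[of X 1 "\<lambda>i. p [i]" 1 "\<lambda>i. q [i]"] by simp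
  show ?case
    by (rule mem_eq[OF comm.cadd[OF add.IH]]) (use fX in \<open>auto simp: e fun_eq_iff\<close>)
next
  case (smult p c)
  have e: "eX X (\<lambda>i. c * p [i]) = (\<lambda>u. c * eX X (\<lambda>i. p [i]) u)"
    using eX_lin[of X c "\<lambda>i. p [i]" 0 "\<lambda>i. p [i]"] by simp
  show ?case
    by (rule mem_eq[OF comm.csmult[OF smult.IH, of c]]) (use fX in \<open>auto simp: e fun_eq_iff algebra_simps\<close>)
next
  case (br p q)
  show ?case by (rule mem_eq[OF comm.cbr[OF br.hyps(1) br.hyps(2)]]) (simp add: bracket_single eX_zero)
qed

inductive_set modc :: "'a set \<Rightarrow> 'b set \<Rightarrow> ('a list \<times> 'b \<Rightarrow> 'k::comm_ring_1) set" for X Y where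
  mact: "l \<in> flie X \<Longrightarrow> v \<in> fmod X Y \<Longrightarrow> act l v \<in> modc X Y"
| mzero: "(\<lambda>_. 0) \<in> modc X Y"
| madd: "p \<in> modc X Y \<Longrightarrow> q \<in> modc X Y \<Longrightarrow> (\<lambda>w. p w + q w) \<in> modc X Y"
| msmult: "p \<in> modc X Y \<Longrightarrow> (\<lambda>w. c * p w) \<in> modc X Y"

lemma fmod_zero: "(\<lambda>_. 0) \<in> fmod X Y" by (simp add: fmod_def)

lemma fmodI: "finite {z. v z \<noteq> 0} \<Longrightarrow> (\<And>w y. v (w, y) \<noteq> 0 \<Longrightarrow> set w \<subseteq> X \<and> y \<in> Y) \<Longrightarrow> v \<in> fmod X Y"
  unfolding fmod_def by blast

lemma fmodD: "v \<in> fmod X Y \<Longrightarrow> finite {z. v z \<noteq> 0}" "v \<in> fmod X Y \<Longrightarrow> v (w, y) \<noteq> 0 \<Longrightarrow> set w \<subseteq> X"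
  "v \<in> fmod X Y \<Longrightarrow> v (w, y) \<noteq> 0 \<Longrightarrow> y \<in> Y"
  unfolding fmod_def by blast+

lemma fmod_add: "p \<in> fmod X Y \<Longrightarrow> q \<in> fmod X Y \<Longrightarrow> (\<lambda>w. p w + q w) \<in> fmod X Y"
proof (rule fmodI)
  assume p: "p \<in> fmod X Y" and q: "q \<in> fmod X Y"
  have "{z. p z + q z \<noteq> 0} \<subseteq> {z. p z \<noteq> 0} \<union> {z. q z \<noteq> 0}" by auto
  then show "finite {z. p z + q z \<noteq> 0}" using fmodD(1)[OF p] fmodD(1)[OF q] by (meson finite_UnI finite_subset)
  fix w y assume "p (w, y) + q (w, y) \<noteq> 0"
  then have "p (w, y) \<noteq> 0 \<or> q (w, y) \<noteq> 0" by auto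
  then show "set w \<subseteq> X \<and> y \<in> Y" using fmodD(2,3)[OF p] fmodD(2,3)[OF q] by blast
qed

lemma fmod_smult: "p \<in> fmod X Y \<Longrightarrow> (\<lambda>w. c * p w) \<in> fmod X Y"
proof (rule fmodI)
  assume p: "p \<in> fmod X Y"
  have "{z. c * p z \<noteq> 0} \<subseteq> {z. p z \<noteq> 0}" by auto
  then show "finite {z. c * p z \<noteq> 0}" using fmodD(1)[OF p] by (meson finite_subset)
  fix w y assume "c * p (w, y) \<noteq> 0"
  then have "p (w, y) \<noteq> 0" by auto
  then show "set w \<subseteq> X \<and> y \<in> Y" using fmodD(2,3)[OF p] by blast
qed

lemma modc_fmod: "p \<in> modc X Y \<Longrightarrow> p \<in> fmod X Y"
  by (induction rule: modc.induct) (auto intro: act_fmod fmod_zero fmod_add fmod_smult)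

lemma act_nil: "act l v ([], y) = l [] * v ([], y)"
  by (simp add: act_def)

lemma modc_nil: "p \<in> modc X Y \<Longrightarrow> p ([], y) = 0"
  by (induction rule: modc.induct) (auto simp: act_nil flie_nil)

definition eY :: "'b set \<Rightarrow> ('b \<Rightarrow> 'k::comm_ring_1) \<Rightarrow> 'a list \<times> 'b \<Rightarrow> 'k" where
  "eY Y c = (\<lambda>(w, y). if w = [] \<and> y \<in> Y then c y else 0)"

lemma eY_in: "finite Y \<Longrightarrow> eY Y c \<in> fmod X Y"
  unfolding fmod_def eY_def
  by (auto intro: finite_subset[of _ "{[]} \<times> Y"] split: if_splits)

lemma eY_lin: "eY Y (\<lambda>i. a * c i + b * c' i) = (\<lambda>u. a * eY Y c u + b * eY Y c' u)"
  by (auto simp: eY_def fun_eq_iff)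

lemma eY_d: "c \<in> suppin Y \<Longrightarrow> (\<lambda>i. eY Y c ([], i)) = c"
  by (auto simp: eY_def suppin_def fun_eq_iff)

lemma dY_W: "a \<in> fmod X Y \<Longrightarrow> i \<notin> Y \<Longrightarrow> a ([], i) = 0"
  unfolding fmod_def by auto

definition shift :: "'a \<Rightarrow> ('a list \<times> 'b \<Rightarrow> 'k) \<Rightarrow> 'a list \<times> 'b \<Rightarrow> 'k" where
  "shift x a = (\<lambda>(w, y). a (x # w, y))"

lemma shift_fmod: "x \<in> X \<Longrightarrow> a \<in> fmod X Y \<Longrightarrow> shift x a \<in> fmod X Y"
proof -
  assume x: "x \<in> X" and a: "a \<in> fmod X Y"
  have "{z. shift x a z \<noteq> 0} \<subseteq> (\<lambda>(w, y). (tl w, y)) ` {z. a z \<noteq> 0}"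
  proof
    fix z assume "z \<in> {z. shift x a z \<noteq> 0}"
    then obtain w y where "z = (w, y)" "a (x # w, y) \<noteq> 0" by (auto simp: shift_def split: prod.splits)
    then show "z \<in> (\<lambda>(w, y). (tl w, y)) ` {z. a z \<noteq> 0}"
      by (auto intro!: image_eqI[where x="(x # w, y)"])
  qed
  then have "finite {z. shift x a z \<noteq> 0}" using fmodD(1)[OF a] by (meson finite_imageI finite_subset)
  then show ?thesis
  proof (rule fmodI)
    fix w y assume "shift x a (w, y) \<noteq> 0"
    then have "a (x # w, y) \<noteq> 0" by (simp add: shift_def)
    then show "set w \<subseteq> X \<and> y \<in> Y" using fmodD(2,3)[OF a] by fastforce
  qed
qed

lemma modc_sum: "finite F \<Longrightarrow> (\<forall>x\<in>F. g x \<in> modc X Y) \<Longrightarrow> (\<lambda>z. \<Sum>x\<in>F. g x z) \<in> modc X Y"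
proof (induction F rule: finite_induct)
  case empty then show ?case using modc.mzero by simp
next
  case (insert x F)
  then have "(\<lambda>z. g x z + (\<Sum>x\<in>F. g x z)) \<in> modc X Y" by (intro modc.madd) auto
  then show ?case using insert by simp
qed

lemma decY: "finite X \<Longrightarrow> a \<in> fmod X Y \<Longrightarrow> (\<lambda>u. a u - eY Y (\<lambda>i. a ([], i)) u) \<in> modc X Y"
proof -
  assume fX: "finite X" and a: "a \<in> fmod X Y"
  have "(\<lambda>z. \<Sum>x\<in>X. act (gen x) (shift x a) z) \<in> modc X Y"
    by (rule modc_sum[OF fX]) (auto intro!: modc.mact flie.gen shift_fmod a)
  moreover have "(\<lambda>u. a u - eY Y (\<lambda>i. a ([], i)) u) = (\<lambda>z. \<Sum>x\<in>X. act (gen x) (shift x a) z)"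
  proof
    fix z :: "'a list \<times> 'b"
    obtain w y where z: "z = (w, y)" by (cases z)
    show "a z - eY Y (\<lambda>i. a ([], i)) z = (\<Sum>x\<in>X. act (gen x) (shift x a) z)"
    proof (cases w)
      case Nil
      then show ?thesis using a z by (auto simp: act_gen eY_def fmod_def)
    next
      case (Cons x' w')
      have "(\<Sum>x\<in>X. act (gen x) (shift x a) z) = (\<Sum>x\<in>X. if x' = x then a (x' # w', y) else 0)"
        by (rule sum.cong) (auto simp: z Cons act_gen shift_def)
      also have "\<dots> = (if x' \<in> X then a (x' # w', y) else 0)" using fX by simp
      also have "\<dots> = a z" using fmodD(2)[OF a, of "x' # w'" y] z Cons by auto
      finally show ?thesis using z Cons by (simp add: eY_def)
    qed
  qed
  ultimately show ?thesis by simp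
qed

theorem theorem4:
  fixes X1 :: "'a set" and Y1 :: "'b set" and X2 :: "'c set" and Y2 :: "'d set"
  assumes "infinite (UNIV :: 'k::field_char_0 set)"
    and "finite X1" and "finite X2" and "finite Y1" and "finite Y2"
    and "\<exists>(\<phi> :: ('a list \<Rightarrow> 'k) \<Rightarrow> ('c list \<Rightarrow> 'k))
          (\<psi> :: ('a list \<times> 'b \<Rightarrow> 'k) \<Rightarrow> ('c list \<times> 'd \<Rightarrow> 'k)).
          rep_iso \<phi> \<psi> X1 Y1 X2 Y2"
  shows "card X1 = card X2 \<and> card Y1 = card Y2"
proof -
  obtain \<phi> :: "('a list \<Rightarrow> 'k) \<Rightarrow> ('c list \<Rightarrow> 'k)" and \<psi> :: "('a list \<times> 'b \<Rightarrow> 'k) \<Rightarrow> ('c list \<times> 'd \<Rightarrow> 'k)"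
    where R: "rep_iso \<phi> \<psi> X1 Y1 X2 Y2" using assms(6) by blast
  have b\<phi>: "bij_betw \<phi> (flie X1) (flie X2)" and l\<phi>: "linear_on (flie X1) \<phi>"
    and br\<phi>: "\<And>p q. p \<in> flie X1 \<Longrightarrow> q \<in> flie X1 \<Longrightarrow> \<phi> (bracket p q) = bracket (\<phi> p) (\<phi> q)"
    and b\<psi>: "bij_betw \<psi> (fmod X1 Y1) (fmod X2 Y2)" and l\<psi>: "linear_on (fmod X1 Y1) \<psi>"
    and act\<psi>: "\<And>l v. l \<in> flie X1 \<Longrightarrow> v \<in> fmod X1 Y1 \<Longrightarrow> act (\<phi> l) (\<psi> v) = \<psi> (act l v)"
    using R unfolding rep_iso_def by blast+
  have \<phi>img: "\<phi> ` flie X1 = flie X2" using b\<phi> by (simp add: bij_betw_def)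
  have \<psi>img: "\<psi> ` fmod X1 Y1 = fmod X2 Y2" using b\<psi> by (simp add: bij_betw_def)
  have \<phi>in: "\<And>p. p \<in> flie X1 \<Longrightarrow> \<phi> p \<in> flie X2" using \<phi>img by blast
  have \<psi>in: "\<And>p. p \<in> fmod X1 Y1 \<Longrightarrow> \<psi> p \<in> fmod X2 Y2" using \<psi>img by blast

  have fC1X: "\<phi> p \<in> comm X2" if "p \<in> comm X1" for p
    using that
  proof (induction rule: comm.induct)
    case (cbr p q) then show ?case by (simp add: br\<phi> \<phi>in comm.cbr)
  next
    case czero then show ?case by (simp add: lin_zero[OF l\<phi> flie.zero] comm.czero)
  next
    case (cadd p q) then show ?case by (simp add: lin_add[OF l\<phi> comm_flie comm_flie] comm.cadd)
  next
    case (csmult p c) then show ?case by (simp add: lin_smult[OF l\<phi> comm_flie] comm.csmult)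
  qed
  have fC2X: "p \<in> \<phi> ` comm X1" if "p \<in> comm X2" for p
    using that
  proof (induction rule: comm.induct)
    case (cbr p q)
    then obtain p' q' where pq: "p' \<in> flie X1" "q' \<in> flie X1" "p = \<phi> p'" "q = \<phi> q'" using \<phi>img by blast
    have "bracket p q = \<phi> (bracket p' q')" using br\<phi>[OF pq(1,2)] pq(3,4) by simp
    then show ?case by (rule image_eqI[OF _ comm.cbr[OF pq(1,2)]])
  next
    case czero show ?case by (rule image_eqI[where f=\<phi> and x="\<lambda>_. 0", OF lin_zero[OF l\<phi> flie.zero, symmetric] comm.czero])
  next
    case (cadd p q)
    then obtain p' q' where pq: "p' \<in> comm X1" "q' \<in> comm X1" "p = \<phi> p'" "q = \<phi> q'" by blast
    have "(\<lambda>w. p w + q w) = \<phi> (\<lambda>w. p' w + q' w)" using lin_add[OF l\<phi> comm_flie[OF pq(1)] comm_flie[OF pq(2)]] pq(3,4) by simp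
    then show ?case by (rule image_eqI[OF _ comm.cadd[OF pq(1,2)]])
  next
    case (csmult p c)
    then obtain p' where pq: "p' \<in> comm X1" "p = \<phi> p'" by blast
    have "(\<lambda>w. c * p w) = \<phi> (\<lambda>w. c * p' w)" using lin_smult[OF l\<phi> comm_flie[OF pq(1)]] pq(2) by simp
    then show ?case by (rule image_eqI[OF _ comm.csmult[OF pq(1)]])
  qed
  have cX: "card X1 = card X2"
  proof (rule abstract_card[where f=\<phi> and A="flie X1" and B="flie X2" and CA="comm X1" and CB="comm X2"
        and ptA="\<lambda>x. [x]" and ptB="\<lambda>x. [x]" and eA="eX X1" and eB="eX X2"])
    show "finite X1" "finite X2" by (fact assms(2), fact assms(3))
    show "comm X1 \<subseteq> flie X1" using comm_flie by blast
    show "linear_on (flie X1) \<phi>" "bij_betw \<phi> (flie X1) (flie X2)" by (fact l\<phi>, fact b\<phi>)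
    show "\<phi> ` comm X1 \<subseteq> comm X2" using fC1X by blast
    show "comm X2 \<subseteq> \<phi> ` comm X1" using fC2X by blast
    show "\<And>c. eX X1 c \<in> flie X1" by (rule eX_in[OF assms(2)])
    show "\<And>c. eX X2 c \<in> flie X2" by (rule eX_in[OF assms(3)])
    show "\<And>c c' a b. eX X1 (\<lambda>i. a * c i + b * c' i) = (\<lambda>u. a * eX X1 c u + b * eX X1 c' u)" by (rule eX_lin)
    show "\<And>c c' a b. eX X2 (\<lambda>i. a * c i + b * c' i) = (\<lambda>u. a * eX X2 c u + b * eX X2 c' u)" by (rule eX_lin)
    show "\<And>c. c \<in> suppin X1 \<Longrightarrow> (\<lambda>i. eX X1 c [i]) = c" by (rule eX_d[OF assms(2)])
    show "\<And>c. c \<in> suppin X2 \<Longrightarrow> (\<lambda>i. eX X2 c [i]) = c" by (rule eX_d[OF assms(3)])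
    show "\<And>a i. a \<in> flie X1 \<Longrightarrow> i \<notin> X1 \<Longrightarrow> a [i] = 0" by (rule flie_single)
    show "\<And>a i. a \<in> flie X2 \<Longrightarrow> i \<notin> X2 \<Longrightarrow> a [i] = 0" by (rule flie_single)
    show "\<And>a. a \<in> flie X1 \<Longrightarrow> (\<lambda>u. a u - eX X1 (\<lambda>i. a [i]) u) \<in> comm X1" by (rule decX[OF assms(2)])
    show "\<And>a. a \<in> flie X2 \<Longrightarrow> (\<lambda>u. a u - eX X2 (\<lambda>i. a [i]) u) \<in> comm X2" by (rule decX[OF assms(3)])
    show "\<And>a i. a \<in> comm X1 \<Longrightarrow> a [i] = 0" by (rule comm_single)
    show "\<And>a i. a \<in> comm X2 \<Longrightarrow> a [i] = 0" by (rule comm_single)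
  qed

  have fC1Y: "\<psi> p \<in> modc X2 Y2" if "p \<in> modc X1 Y1" for p
    using that
  proof (induction rule: modc.induct)
    case (mact l v) then show ?case by (simp add: act\<psi>[symmetric] \<phi>in \<psi>in modc.mact)
  next
    case mzero then show ?case by (simp add: lin_zero[OF l\<psi> fmod_zero] modc.mzero)
  next
    case (madd p q) then show ?case by (simp add: lin_add[OF l\<psi> modc_fmod modc_fmod] modc.madd)
  next
    case (msmult p c) then show ?case by (simp add: lin_smult[OF l\<psi> modc_fmod] modc.msmult)
  qed
  have fC2Y: "p \<in> \<psi> ` modc X1 Y1" if "p \<in> modc X2 Y2" for p
    using that
  proof (induction rule: modc.induct)
    case (mact l v)
    then obtain l' v' where pq: "l' \<in> flie X1" "v' \<in> fmod X1 Y1" "l = \<phi> l'" "v = \<psi> v'" using \<phi>img \<psi>img by blast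
    have "act l v = \<psi> (act l' v')" using act\<psi>[OF pq(1,2)] pq(3,4) by simp
    then show ?case by (rule image_eqI[OF _ modc.mact[OF pq(1,2)]])
  next
    case mzero show ?case by (rule image_eqI[where f=\<psi> and x="\<lambda>_. 0", OF lin_zero[OF l\<psi> fmod_zero, symmetric] modc.mzero])
  next
    case (madd p q)
    then obtain p' q' where pq: "p' \<in> modc X1 Y1" "q' \<in> modc X1 Y1" "p = \<psi> p'" "q = \<psi> q'" by blast
    have "(\<lambda>w. p w + q w) = \<psi> (\<lambda>w. p' w + q' w)" using lin_add[OF l\<psi> modc_fmod[OF pq(1)] modc_fmod[OF pq(2)]] pq(3,4) by simp
    then show ?case by (rule image_eqI[OF _ modc.madd[OF pq(1,2)]])
  next
    case (msmult p c)
    then obtain p' where pq: "p' \<in> modc X1 Y1" "p = \<psi> p'" by blast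
    have "(\<lambda>w. c * p w) = \<psi> (\<lambda>w. c * p' w)" using lin_smult[OF l\<psi> modc_fmod[OF pq(1)]] pq(2) by simp
    then show ?case by (rule image_eqI[OF _ modc.msmult[OF pq(1)]])
  qed
  have cY: "card Y1 = card Y2"
  proof (rule abstract_card[where f=\<psi> and A="fmod X1 Y1" and B="fmod X2 Y2" and CA="modc X1 Y1" and CB="modc X2 Y2"
        and ptA="\<lambda>y. ([], y)" and ptB="\<lambda>y. ([], y)" and eA="eY Y1" and eB="eY Y2"])
    show "finite Y1" "finite Y2" by (fact assms(4), fact assms(5))
    show "modc X1 Y1 \<subseteq> fmod X1 Y1" using modc_fmod by blast
    show "linear_on (fmod X1 Y1) \<psi>" "bij_betw \<psi> (fmod X1 Y1) (fmod X2 Y2)" by (fact l\<psi>, fact b\<psi>)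
    show "\<psi> ` modc X1 Y1 \<subseteq> modc X2 Y2" using fC1Y by blast
    show "modc X2 Y2 \<subseteq> \<psi> ` modc X1 Y1" using fC2Y by blast
    show "\<And>c. eY Y1 c \<in> fmod X1 Y1" by (rule eY_in[OF assms(4)])
    show "\<And>c. eY Y2 c \<in> fmod X2 Y2" by (rule eY_in[OF assms(5)])
    show "\<And>c c' a b. eY Y1 (\<lambda>i. a * c i + b * c' i) = (\<lambda>u. a * eY Y1 c u + b * eY Y1 c' u)" by (rule eY_lin)
    show "\<And>c c' a b. eY Y2 (\<lambda>i. a * c i + b * c' i) = (\<lambda>u. a * eY Y2 c u + b * eY Y2 c' u)" by (rule eY_lin)
    show "\<And>c. c \<in> suppin Y1 \<Longrightarrow> (\<lambda>i. eY Y1 c ([], i)) = c" by (rule eY_d)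
    show "\<And>c. c \<in> suppin Y2 \<Longrightarrow> (\<lambda>i. eY Y2 c ([], i)) = c" by (rule eY_d)
    show "\<And>a i. a \<in> fmod X1 Y1 \<Longrightarrow> i \<notin> Y1 \<Longrightarrow> a ([], i) = 0" by (rule dY_W)
    show "\<And>a i. a \<in> fmod X2 Y2 \<Longrightarrow> i \<notin> Y2 \<Longrightarrow> a ([], i) = 0" by (rule dY_W)
    show "\<And>a. a \<in> fmod X1 Y1 \<Longrightarrow> (\<lambda>u. a u - eY Y1 (\<lambda>i. a ([], i)) u) \<in> modc X1 Y1" by (rule decY[OF assms(2)])
    show "\<And>a. a \<in> fmod X2 Y2 \<Longrightarrow> (\<lambda>u. a u - eY Y2 (\<lambda>i. a ([], i)) u) \<in> modc X2 Y2" by (rule decY[OF assms(3)])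
    show "\<And>a i. a \<in> modc X1 Y1 \<Longrightarrow> a ([], i) = 0" by (rule modc_nil)
    show "\<And>a i. a \<in> modc X2 Y2 \<Longrightarrow> a ([], i) = 0" by (rule modc_nil)
  qed
  show ?thesis using cX cY by simp
qed

end
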